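(* In the ALOHA network described below, the transmit probability $p_{\mathrm{opt}}\in(0,1)$ that minimizes the mean local delay $\widetilde{D}(p)$ satisfies $$p_{\mathrm{opt}}\in\left(\frac{1}{\lambda c_d r_0^d\theta^{\delta}C(\delta)+2},\ \frac{1}{\lambda c_d r_0^d\theta^{\delta}C(\delta)}\right).$$
   Context: Model: transmitters form a homogeneous Poisson point process $\Phi$ of intensity $\lambda>0$ in $\mathbb{R}^d$; the typical receiver is at the origin and its desired transmitter $x_0\in\Phi$ is at distance $r_0>0$; probabilities are under the Palm distribution at $x_0$. Time is slotted. Path loss $\kappa r^{-\alpha}$ with $\alpha>d$, $\delta=d/\alpha\in(0,1)$. Power fading coefficients $h_{k,x}$ are i.i.d. exponential with mean $1$ over transmitters and slots, independent of everything. Unit power, always backlogged transmitters. Bandwidth $W$, noise power spectral density $N_r$, $N_0=N_r/\kappa$, SINR threshold $\theta>0$. $c_d$ is the volume of the unit ball in $\mathbb{R}^d$, $C(\delta)=\Gamma(1+\delta)\Gamma(1-\delta)=\frac{\pi\delta}{\sin(\pi\delta)}$. ALOHA with transmit probability $p$: each transmitter (including $x_0$) is independently active in each slot with probability $p$, independently over transmitters and slots; $\Phi_k$ is the active set in slot $k$; $\mathrm{SINR}_k=\frac{h_{k,x_0}r_0^{-\alpha}}{WN_0+\sum_{x\in\Phi\setminus\{x_0\}}h_{k,x}|x|^{-\alpha}\mathbf{1}(x\in\Phi_k)}$; a slot is successful if $x_0$ is active and $\mathrm{SINR}_k>\theta$; the local delay is the number of slots until the first success and $\widetilde{D}(p)$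 is its mean. (It equals $\widetilde{D}(p)=\frac1p\exp\left(\frac{p\lambda c_d r_0^d\theta^\delta C(\delta)}{(1-p)^{1-\delta}}+\theta r_0^\alpha WN_0\right)$.) *)

theory Defs
  imports "HOL-Analysis.Analysis"
begin

definition C_delta :: "real \<Rightarrow> real" where
  "C_delta \<delta> = Gamma (1 + \<delta>) * Gamma (1 - \<delta>)"

text \<open>Mean local delay of ALOHA with transmit probability p, in the closed form
  stated in the model (d = dimension, alpha = path-loss exponent, delta = d/alpha,
  c_d = volume of the unit ball in R^d).\<close>
definition mean_local_delay ::
  "nat \<Rightarrow> real \<Rightarrow> real \<Rightarrow> real \<Rightarrow> real \<Rightarrow> real \<Rightarrow> real \<Rightarrow> real \<Rightarrow> real" where
  "mean_local_delay d \<alpha> lam r0 \<theta> W N0 p =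
     (let \<delta> = real d / \<alpha> in
      (1 / p) * exp (p * lam * unit_ball_vol (real d) * r0 ^ d * \<theta> powr \<delta> * C_delta \<delta>
                       / (1 - p) powr (1 - \<delta>)
                     + \<theta> * r0 powr \<alpha> * W * N0))"

end

theory Submission
  imports Defs
begin

lemma hder:
  fixes A e p :: real assumes "0<p" "p<1"
  shows "((\<lambda>p. A*p/(1-p) powr e) has_real_derivative
        (A*((1-p) powr e + p*e*(1-p) powr (e-1))/((1-p) powr e)^2)) (at p)"
  using assms by (auto intro!: derivative_eq_intros simp: power2_eq_square algebra_simps)

lemma fder:
  fixes A B e p H :: real assumes "0<p" "p<1"
  and h: "((\<lambda>p. A*p/(1-p) powr e) has_real_derivative H) (at p)"
  shows "((\<lambda>p. (1/p) * exp (A*p/(1-p) powr e + B)) has_real_derivative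
     (-(1/p^2) * exp (A*p/(1-p) powr e + B) + (1/p)*(exp (A*p/(1-p) powr e + B) * H))) (at p)"
proof -
  have h2: "((\<lambda>p. A*p/(1-p) powr e + B) has_real_derivative H) (at p)"
    using DERIV_add[OF h DERIV_const[of B]] by simp
  have g: "((\<lambda>p. exp (A*p/(1-p) powr e + B)) has_real_derivative exp (A*p/(1-p) powr e + B) * H) (at p)"
    using DERIV_chain2[OF DERIV_exp h2] by simp
  have i: "((\<lambda>p. 1/p) has_real_derivative -(1/p^2)) (at p)"
    using assms by (auto intro!: derivative_eq_intros simp: power2_eq_square)
  show ?thesis using DERIV_mult[OF i g] by simp
qed

theorem theorem6:
  fixes d :: nat and \<alpha> lam r0 \<theta> W N0 p_opt :: real
  assumes "d \<ge> 1" and "\<alpha> > real d" and "lam > 0" and "r0 > 0" and "\<theta> > 0"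
    and "W > 0" and "N0 \<ge> 0"
    and "p_opt \<in> {0<..<1}"
    and "\<forall>p\<in>{0<..<1}. mean_local_delay d \<alpha> lam r0 \<theta> W N0 p_opt
                       \<le> mean_local_delay d \<alpha> lam r0 \<theta> W N0 p"
  shows "p_opt \<in> {1 / (lam * unit_ball_vol (real d) * r0 ^ d * \<theta> powr (real d / \<alpha>)
                        * C_delta (real d / \<alpha>) + 2)
                 <..< 1 / (lam * unit_ball_vol (real d) * r0 ^ d * \<theta> powr (real d / \<alpha>)
                        * C_delta (real d / \<alpha>))}"
proof -
  define \<delta> where "\<delta> = real d / \<alpha>"
  have a0: "\<alpha> > 0" using assms(1,2) by linarith
  have \<delta>0: "0 < \<delta>" using assms(1) a0 by (simp add: \<delta>_def)
  have \<delta>1: "\<delta> < 1" using assms(2) a0 by (simp add: \<delta>_def)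
  define e where "e = 1 - \<delta>"
  define A where "A = lam * unit_ball_vol (real d) * r0 ^ d * \<theta> powr \<delta> * C_delta \<delta>"
  define B where "B = \<theta> * r0 powr \<alpha> * W * N0"
  have Cpos: "C_delta \<delta> > 0" using \<delta>0 \<delta>1 by (simp add: C_delta_def)
  have Apos: "A > 0" unfolding A_def using Cpos assms(3,4,5) by simp
  define F where "F = (\<lambda>p::real. (1/p) * exp (A*p/(1-p) powr e + B))"
  have eqF: "mean_local_delay d \<alpha> lam r0 \<theta> W N0 p = F p" for p
    by (simp add: mean_local_delay_def Let_def F_def A_def B_def e_def \<delta>_def ac_simps)
  define p where "p = p_opt"
  have p0: "0 < p" and p1: "p < 1" using assms(8) by (auto simp: p_def)
  define q where "q = 1 - p"
  have q0: "0 < q" and q1: "q < 1" using p0 p1 by (auto simp: q_def)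
  define s where "s = q powr e"
  have s0: "s > 0" using q0 by (simp add: s_def)
  define H where "H = A*((1-p) powr e + p*e*(1-p) powr (e-1))/((1-p) powr e)^2"
  define E where "E = exp (A*p/(1-p) powr e + B)"
  have der: "(F has_real_derivative (-(1/p^2) * E + (1/p)*(E * H))) (at p)"
    unfolding F_def E_def using fder[OF p0 p1 hder[OF p0 p1]] by (simp add: H_def)
  have loc: "\<forall>y. \<bar>p - y\<bar> < min p (1-p) \<longrightarrow> F p \<le> F y"
  proof (intro allI impI)
    fix y assume "\<bar>p - y\<bar> < min p (1-p)"
    then have "y \<in> {0<..<1}" by auto
    then show "F p \<le> F y" using assms(9) eqF by (simp add: p_def)
  qed
  have "-(1/p^2) * E + (1/p)*(E * H) = 0"
    by (rule DERIV_local_min[OF der _ loc]) (use p0 p1 in simp)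
  moreover have "E > 0" by (simp add: E_def)
  ultimately have pH: "p * H = 1" using p0
    by (simp add: field_simps power2_eq_square)
  have qe1: "q powr (e-1) = s / q" using q0 by (simp add: s_def powr_diff)
  have "H = A*(s + p*e*(s/q))/s^2" unfolding H_def using qe1 by (simp add: s_def q_def)
  with pH have key0: "p * (A*(s + p*e*(s/q))) = s^2" using s0 by (simp add: field_simps)
  have key: "A*p*(1 - \<delta> * p) = q* s"
  proof -
    have c0: "p * (A*(s + p*e*(s/q))) * q = A*p*(q + p*e) * s" using q0 by (simp add: field_simps)
    have c2: "q + p*e = 1 - \<delta> * p" by (simp add: q_def e_def algebra_simps)
    have "A*p*(1 - \<delta> * p) * s = s^2 * q" using c0 c2 key0 by metis
    then have "(A*p*(1 - \<delta> * p)) * s = (q * s) * s" by (simp add: power2_eq_square ac_simps)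
    then show ?thesis using s0 by (metis mult_right_cancel order_less_irrefl)
  qed
  have e0: "0 < e" and e1: "e \<le> 1" using \<delta>0 \<delta>1 by (auto simp: e_def)
  have slt: "s < 1" using powr_less_mono2[OF e0 _ q1] q0 by (simp add: s_def)
  have sge: "q \<le> s" using powr_mono'[OF e1, of q] q0 q1 by (simp add: s_def)
  have dpp: "\<delta> * p < p" using \<delta>1 p0 by simp
  have dp: "0 < 1 - \<delta> * p" using dpp p1 by linarith
  have up: "A*p < 1"
  proof -
    have "q * s < q * 1" using slt q0 by (rule mult_strict_left_mono)
    then have "A*p*(1 - \<delta> * p) < 1 - \<delta> * p" using key dpp by (simp add: q_def)
    then show ?thesis using dp by (simp add: mult_less_cancel_right2)
  qed
  have lo: "p*(A+2) > 1"
  proof (rule ccontr)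
    assume "\<not> p*(A+2) > 1"
    then have h: "A*p \<le> 1 - 2*p" by (simp add: algebra_simps)
    then have "A*p*(1 - \<delta> * p) \<le> (1-2*p)*(1 - \<delta> * p)" using dp by (intro mult_right_mono) simp_all
    moreover have "q*q \<le> q * s" using sge q0 by simp
    moreover have "(1-2*p)*(1 - \<delta> * p) < q*q"
    proof -
      have eq: "(1-p)*(1-p) - (1-2*p)*(1 - \<delta> * p) = p*(p + \<delta>*(1-2*p))" by (simp add: algebra_simps)
      have pos: "p + \<delta>*(1-2*p) > 0"
      proof (cases "p \<le> 1/2")
        case True then have "\<delta>*(1-2*p) \<ge> 0" using \<delta>0 by simp
        then show ?thesis using p0 by linarith
      next
        case False then have "\<delta>*(1-2*p) \<ge> 1*(1-2*p)" using \<delta>1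
          by (intro mult_right_mono_neg) simp_all
        then show ?thesis using p1 by simp
      qed
      have "p*(p + \<delta>*(1-2*p)) > 0" using p0 pos by simp
      then show ?thesis using eq by (simp add: q_def)
    qed
    ultimately show False using key by linarith
  qed
  have "1/(A+2) < p" using lo Apos by (simp add: field_simps)
  moreover have "p < 1/A" using up Apos by (simp add: field_simps)
  ultimately show ?thesis by (simp add: p_def A_def \<delta>_def)
qed

end
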